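(* Let $\mathcal{O}_K$ be a Henselian discrete valuation domain with field of fractions $K$ of characteristic $0$ and algebraically closed residue field of characteristic $2$, with normalized valuation $v$. Let $E_1/K$ and $E_2/K$ be elliptic curves related by a $2$-isogeny over $K$ from $E_1$ to $E_2$, and let $j_1:=j(E_1)$, $j_2:=j(E_2)$. (i) If $v(j_1)=v(j_2)>0$, then $v(j_1)=v(j_2)=6v(2)$. (ii) If $0<v(j_1)<v(j_2)$, then $v(j_1)<6v(2)$; moreover: (a) if $v(j_1)<4v(2)$ then $v(j_2)=2v(j_1)$; (b) if $4v(2)<v(j_1)<6v(2)$ then $v(j_2)=12v(2)-v(j_1)$; (c) if $v(j_1)=4v(2)$ then $v(j_2)=8v(2)+3r$ for some integer $r\ge 0$. (iii) If $K=\mathbb{Q}_2^{\mathrm{unr}}$ (the maximal unramified extension of $\mathbb{Q}_2$), $j_1,j_2\in\mathbb{Q}_2\subset K$ and $v(j_1)=4v(2)<v(j_2)$, then $v(j_2)=8v(2)+3r$ for some integer $r\ge 1$. *)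

theory Defs
  imports "HOL-Computational_Algebra.Polynomial"
begin

text \<open>A normalized discrete valuation: v is only meaningful on nonzero elements
(v 0 = infinity is not represented); it is multiplicative-to-additive, satisfies
the ultrametric inequality and is surjective onto the integers (normalized).\<close>

definition ndval :: "('k::field \<Rightarrow> int) \<Rightarrow> bool" where
  "ndval v \<longleftrightarrow>
     (\<forall>x y. x \<noteq> 0 \<longrightarrow> y \<noteq> 0 \<longrightarrow> v (x * y) = v x + v y) \<and>
     (\<forall>x y. x \<noteq> 0 \<longrightarrow> y \<noteq> 0 \<longrightarrow> x + y \<noteq> 0 \<longrightarrow> min (v x) (v y) \<le> v (x + y)) \<and>
     (\<forall>n. \<exists>x. x \<noteq> 0 \<and> v x = n)"

definition vring :: "('k::field \<Rightarrow> int) \<Rightarrow> 'k set" where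
  "vring v = {x. x = 0 \<or> 0 \<le> v x}"

definition vmax :: "('k::field \<Rightarrow> int) \<Rightarrow> 'k set" where
  "vmax v = {x. x = 0 \<or> 0 < v x}"

definition vpoly :: "('k::field \<Rightarrow> int) \<Rightarrow> 'k poly \<Rightarrow> bool" where
  "vpoly v f \<longleftrightarrow> (\<forall>i. coeff f i \<in> vring v)"

definition henselian :: "('k::field \<Rightarrow> int) \<Rightarrow> bool" where
  "henselian v \<longleftrightarrow>
     (\<forall>f a. lead_coeff f = 1 \<and> vpoly v f \<and> a \<in> vring v \<and> poly f a \<in> vmax v \<and>
            poly (pderiv f) a \<notin> vmax v \<longrightarrow>
            (\<exists>b \<in> vring v. poly f b = 0 \<and> b - a \<in> vmax v))"

text \<open>The residue field O/m is algebraically closed: every monic nonconstant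
polynomial over O has a root modulo m.\<close>
definition residue_alg_closed :: "('k::field \<Rightarrow> int) \<Rightarrow> bool" where
  "residue_alg_closed v \<longleftrightarrow>
     (\<forall>f. lead_coeff f = 1 \<and> 1 \<le> degree f \<and> vpoly v f \<longrightarrow>
          (\<exists>a \<in> vring v. poly f a \<in> vmax v))"

definition Qclos :: "('k::field_char_0 \<Rightarrow> int) \<Rightarrow> 'k set" where
  "Qclos v = {x. \<forall>n. \<exists>q \<in> \<rat>. x = q \<or> n \<le> v (x - q)}"

definition vcauchy :: "('k::field \<Rightarrow> int) \<Rightarrow> (nat \<Rightarrow> 'k) \<Rightarrow> bool" where
  "vcauchy v s \<longleftrightarrow> (\<forall>N. \<exists>M. \<forall>m\<ge>M. \<forall>k\<ge>M. s m = s k \<or> N \<le> v (s m - s k))"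

definition vconverges :: "('k::field \<Rightarrow> int) \<Rightarrow> (nat \<Rightarrow> 'k) \<Rightarrow> 'k \<Rightarrow> bool" where
  "vconverges v s L \<longleftrightarrow> (\<forall>N. \<exists>M. \<forall>m\<ge>M. s m = L \<or> N \<le> v (s m - L))"

text \<open>(K,v) is (isomorphic as a valued field to) the maximal unramified extension of Q_2:
the closure of Q in K is complete (hence is Q_2 with the 2-adic valuation), K is algebraic
over it, v(2) = 1 (unramified, v normalized), and the residue field is algebraically closed.\<close>
definition is_Q2unr :: "('k::field_char_0 \<Rightarrow> int) \<Rightarrow> bool" where
  "is_Q2unr v \<longleftrightarrow>
     v 2 = 1 \<and> residue_alg_closed v \<and>
     (\<forall>s. (\<forall>n. s n \<in> Qclos v) \<and> vcauchy v s \<longrightarrow> (\<exists>L \<in> Qclos v. vconverges v s L)) \<and>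
     (\<forall>x. \<exists>p. p \<noteq> 0 \<and> (\<forall>i. coeff p i \<in> Qclos v) \<and> poly p x = 0)"

datatype 'k weier = W (a1: 'k) (a2: 'k) (a3: 'k) (a4: 'k) (a6: 'k)

definition b2 :: "'k::field weier \<Rightarrow> 'k" where "b2 E = a1 E ^ 2 + 4 * a2 E"
definition b4 :: "'k::field weier \<Rightarrow> 'k" where "b4 E = 2 * a4 E + a1 E * a3 E"
definition b6 :: "'k::field weier \<Rightarrow> 'k" where "b6 E = a3 E ^ 2 + 4 * a6 E"
definition b8 :: "'k::field weier \<Rightarrow> 'k" where
  "b8 E = a1 E ^ 2 * a6 E + 4 * a2 E * a6 E - a1 E * a3 E * a4 E + a2 E * a3 E ^ 2 - a4 E ^ 2"
definition c4 :: "'k::field weier \<Rightarrow> 'k" where "c4 E = b2 E ^ 2 - 24 * b4 E"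
definition disc :: "'k::field weier \<Rightarrow> 'k" where
  "disc E = - (b2 E ^ 2 * b8 E) - 8 * b4 E ^ 3 - 27 * b6 E ^ 2 + 9 * b2 E * b4 E * b6 E"
definition jinv :: "'k::field weier \<Rightarrow> 'k" where "jinv E = c4 E ^ 3 / disc E"

definition elliptic :: "'k::field weier \<Rightarrow> bool" where "elliptic E \<longleftrightarrow> disc E \<noteq> 0"

text \<open>K-isomorphism of Weierstrass equations: E' arises from E by
x = u^2 x' + r, y = u^3 y' + s u^2 x' + t with u,r,s,t in K, u nonzero (Silverman III.1).\<close>
definition weier_iso :: "'k::field weier \<Rightarrow> 'k weier \<Rightarrow> bool" where
  "weier_iso E E' \<longleftrightarrow> (\<exists>u r s t. u \<noteq> 0 \<and>
     u * a1 E' = a1 E + 2 * s \<and>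
     u ^ 2 * a2 E' = a2 E - s * a1 E + 3 * r - s ^ 2 \<and>
     u ^ 3 * a3 E' = a3 E + r * a1 E + 2 * t \<and>
     u ^ 4 * a4 E' = a4 E - s * a3 E + 2 * r * a2 E - (t + r * s) * a1 E + 3 * r ^ 2 - 2 * s * t \<and>
     u ^ 6 * a6 E' = a6 E + r * a4 E + r ^ 2 * a2 E + r ^ 3 - t * a3 E - t ^ 2 - r * t * a1 E)"

text \<open>E1 and E2 are related by a K-rational 2-isogeny E1 -> E2 (char K = 0): E1 is
K-isomorphic to y^2 = x^3 + a x^2 + b x with the kernel generated by (0,0), and E2 is
K-isomorphic to its quotient, given by Velu's formula y^2 = x^3 - 2a x^2 + (a^2-4b) x,
the isogeny being (x,y) |-> (y^2/x^2, y(b - x^2)/x^2).\<close>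
definition two_isogenous :: "'k::field weier \<Rightarrow> 'k weier \<Rightarrow> bool" where
  "two_isogenous E1 E2 \<longleftrightarrow> (\<exists>a b. b \<noteq> 0 \<and> a ^ 2 - 4 * b \<noteq> 0 \<and>
     weier_iso E1 (W 0 a 0 b 0) \<and> weier_iso E2 (W 0 (- 2 * a) 0 (a ^ 2 - 4 * b) 0))"

end

theory Submission
  imports Defs
begin

lemma iso_c4:
  fixes u r s t :: "'k::field"
  assumes "u \<noteq> 0"
  shows "c4 (W ((A1+2*s)/u) ((A2 - s*A1 + 3*r - s^2)/u^2) ((A3 + r*A1 + 2*t)/u^3)
     ((A4 - s*A3 + 2*r*A2 - (t+r*s)*A1 + 3*r^2 - 2*s*t)/u^4)
     ((A6 + r*A4 + r^2*A2 + r^3 - t*A3 - t^2 - r*t*A1)/u^6)) = c4 (W A1 A2 A3 A4 A6) / u^4"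
  using assms unfolding c4_def b2_def b4_def by (simp add: field_simps) algebra
lemma iso_disc:
  fixes u r s t :: "'k::field"
  assumes "u \<noteq> 0"
  shows "disc (W ((A1+2*s)/u) ((A2 - s*A1 + 3*r - s^2)/u^2) ((A3 + r*A1 + 2*t)/u^3)
     ((A4 - s*A3 + 2*r*A2 - (t+r*s)*A1 + 3*r^2 - 2*s*t)/u^4)
     ((A6 + r*A4 + r^2*A2 + r^3 - t*A3 - t^2 - r*t*A1)/u^6)) = disc (W A1 A2 A3 A4 A6) / u^12"
  using assms unfolding disc_def b2_def b4_def b6_def b8_def by (simp add: field_simps) algebra

definition vge :: "('k::field \<Rightarrow> int) \<Rightarrow> int \<Rightarrow> 'k \<Rightarrow> bool" where
  "vge v n x \<longleftrightarrow> x = 0 \<or> n \<le> v x"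

context
  fixes v :: "'k::field_char_0 \<Rightarrow> int"
  assumes dv: "ndval v"
begin

lemma v_mult: "x \<noteq> 0 \<Longrightarrow> y \<noteq> 0 \<Longrightarrow> v (x * y) = v x + v y"
  using dv unfolding ndval_def by blast

lemma v_ultra: "x \<noteq> 0 \<Longrightarrow> y \<noteq> 0 \<Longrightarrow> x + y \<noteq> 0 \<Longrightarrow> min (v x) (v y) \<le> v (x + y)"
  using dv unfolding ndval_def by blast

lemma v_one: "v 1 = 0"
  using v_mult[of 1 1] by simp

lemma v_divide: "x \<noteq> 0 \<Longrightarrow> y \<noteq> 0 \<Longrightarrow> v (x / y) = v x - v y"
  using v_mult[of "x / y" y] by simp

lemma v_power: "x \<noteq> 0 \<Longrightarrow> v (x ^ n) = int n * v x"
  by (induction n) (auto simp: v_one v_mult algebra_simps)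

lemma v_m1: "v (-1) = 0"
  using v_mult[of "-1" "-1"] v_one by simp

lemma v_uminus: "v (- x) = v x"
proof (cases "x = 0")
  case False
  then show ?thesis using v_mult[of "-1" x] v_m1 by simp
qed simp

lemma v_strict: assumes "x \<noteq> 0" "y \<noteq> 0" "v x < v y"
  shows "x + y \<noteq> 0 \<and> v (x + y) = v x"
proof -
  have ne: "x + y \<noteq> 0"
  proof
    assume "x + y = 0" then have "y = - x" by (metis add.commute eq_neg_iff_add_eq_0)
    then show False using assms v_uminus by simp
  qed
  have "min (v x) (v y) \<le> v (x + y)" using v_ultra assms ne by blast
  moreover have "min (v (x + y)) (v (- y)) \<le> v (x + y + - y)"
    using v_ultra[of "x+y" "-y"] ne assms by simp
  ultimately show ?thesis using assms ne v_uminus[of y] by auto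
qed

lemma v_strict': assumes "x \<noteq> 0" "vge v n y" "v x < n"
  shows "x + y \<noteq> 0 \<and> v (x + y) = v x"
  using assms v_strict[of x y] unfolding vge_def by (cases "y = 0") auto

lemma vge_add: "vge v n x \<Longrightarrow> vge v n y \<Longrightarrow> vge v n (x + y)"
  unfolding vge_def using v_ultra[of x y] by (cases "x = 0"; cases "y = 0"; cases "x + y = 0") auto

lemma vge_uminus: "vge v n x \<Longrightarrow> vge v n (- x)"
  unfolding vge_def using v_uminus[of x] by auto

lemma vge_diff: "vge v n x \<Longrightarrow> vge v n y \<Longrightarrow> vge v n (x - y)"
  using vge_add[of n x "-y"] vge_uminus[of n y] by simp

lemma vge_mult: "vge v n x \<Longrightarrow> vge v m y \<Longrightarrow> vge v (n + m) (x * y)"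
  unfolding vge_def using v_mult[of x y] by (cases "x = 0"; cases "y = 0") auto

lemma vge_mono: "vge v n x \<Longrightarrow> m \<le> n \<Longrightarrow> vge v m x"
  unfolding vge_def by auto

lemma vge_self: "vge v (v x) x"
  unfolding vge_def by auto

lemma vge_one: "vge v 0 1"
  unfolding vge_def using v_one by auto

lemma vge_of_int: "vge v 0 (of_int k)"
proof (induction k rule: int_induct[where k=0])
  case base then show ?case by (simp add: vge_def)
next
  case (step1 i) then show ?case using vge_add[OF _ vge_one] by simp
next
  case (step2 i) then show ?case using vge_diff[OF _ vge_one] by simp
qed

lemma vge_numeral: "vge v 0 (numeral k)"
  using vge_of_int[of "numeral k"] by simp

lemma v_of_int_ge: "k \<noteq> 0 \<Longrightarrow> 0 \<le> v (of_int k)"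
  using vge_of_int[of k] unfolding vge_def by auto

lemma v_odd: assumes "odd k" "v 2 = 1"
  shows "v (of_int k) = 0 \<and> vge v 1 (of_int k - 1)"
proof -
  obtain j where k: "k = 2 * j + 1" using assms oddE by blast
  have g: "vge v 1 (2 * of_int j)" using vge_mult[OF vge_self[of 2] vge_of_int[of j]] assms by simp
  have "v (1 + 2 * of_int j) = 0" using v_strict'[OF _ g] v_one by simp
  then show ?thesis using g k by (simp add: add.commute)
qed

lemma v_rat: assumes "v 2 = 1"
  shows "m \<noteq> 0 \<Longrightarrow> n \<noteq> 0 \<Longrightarrow> v (of_int m / of_int n) = 0 \<Longrightarrow> vge v 1 (of_int m / of_int n - 1)"
proof (induction "nat \<bar>m\<bar>" arbitrary: m n rule: less_induct)
  case less
  show ?case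
  proof (cases "even m")
    case em: True
    then obtain m1 where m1: "m = 2 * m1" by blast
    have m1nz: "m1 \<noteq> 0" using less m1 by auto
    have vm: "v (of_int m) = 1 + v (of_int m1)" using m1 m1nz v_mult[of 2 "of_int m1"] assms by simp
    show ?thesis
    proof (cases "even n")
      case True
      then obtain n1 where n1: "n = 2 * n1" by blast
      have "(of_int m / of_int n :: 'k) = of_int m1 / of_int n1" using m1 n1 by simp
      moreover have "nat \<bar>m1\<bar> < nat \<bar>m\<bar>" using m1 m1nz by auto
      ultimately show ?thesis using less n1 m1nz by (metis mult_zero_right)
    next
      case False
      then have "v (of_int n) = 0" using v_odd assms by blast
      then show ?thesis using less v_divide[of "of_int m" "of_int n"] vm v_of_int_ge[OF m1nz] by simp
    qed
  next
    case om: False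
    then have vm: "v (of_int m) = 0" using v_odd assms by blast
    show ?thesis
    proof (cases "even n")
      case True
      then obtain n1 where n1: "n = 2 * n1" by blast
      have n1nz: "n1 \<noteq> 0" using less n1 by auto
      have vn: "v (of_int n) = 1 + v (of_int n1)" using n1 n1nz v_mult[of 2 "of_int n1"] assms by simp
      then show ?thesis using less v_divide[of "of_int m" "of_int n"] vm v_of_int_ge[OF n1nz] by simp
    next
      case False
      then have vn: "v (of_int n) = 0" using v_odd assms by blast
      have "even (m - n)" using om False by simp
      then obtain k where k: "m - n = 2 * k" by blast
      have eq: "(of_int m / of_int n - 1 :: 'k) = 2 * of_int k / of_int n"
        using k less(3) by (simp add: field_simps)
      show ?thesis
      proof (cases "k = 0")
        case True then show ?thesis using eq by (simp add: vge_def)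
      next
        case False
        have "v (2 * of_int k / of_int n) = 1 + v (of_int k)"
          using v_divide[of "2 * of_int k" "of_int n"] v_mult[of 2 "of_int k"] False less(3) vn assms by simp
        then show ?thesis using eq v_of_int_ge[OF False] by (simp add: vge_def)
      qed
    qed
  qed
qed

end

lemma jW1: fixes a b :: "'k::field_char_0"
  assumes "b \<noteq> 0" "a^2 - 4*b \<noteq> 0"
  shows "jinv (W 0 a 0 b 0) = 256 * ((a^2/b - 4) + 1)^3 / (a^2/b - 4)"
proof -
  have c: "c4 (W 0 a 0 b 0) = 16*(a^2-3*b)" unfolding c4_def b2_def b4_def by (simp add: algebra_simps power2_eq_square)
  have d: "disc (W 0 a 0 b 0) = 16*b^2*(a^2-4*b)" unfolding disc_def b2_def b4_def b6_def b8_def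
    by (simp add: algebra_simps power2_eq_square power3_eq_cube)
  have "a^2/b - 4 = (a^2 - 4*b)/b" using assms by (simp add: field_simps)
  moreover have "a^2/b - 4 + 1 = (a^2 - 3*b)/b" using assms by (simp add: field_simps)
  ultimately show ?thesis using assms unfolding jinv_def c d
    by (simp add: field_simps power3_eq_cube power2_eq_square)
qed
lemma aux: fixes b Y X :: "'k::field" assumes "b \<noteq> 0" "Y \<noteq> 0"
  shows "16 * (X/b)^3/(Y/b)^2 = 16*X^3/(b*Y^2)"
  using assms by (simp add: power_divide field_simps power3_eq_cube power2_eq_square)
lemma aux2: fixes b Y X :: "'k::field_char_0" assumes "b \<noteq> 0" "Y \<noteq> 0"
  shows "(16*X)^3/(256*b*Y^2) = 16*X^3/(b*Y^2)"
  using assms by (simp add: power_mult_distrib field_simps)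
lemma jW2: fixes a b :: "'k::field_char_0"
  assumes "b \<noteq> 0" "a^2 - 4*b \<noteq> 0"
  shows "jinv (W 0 (-2*a) 0 (a^2-4*b) 0) = 16 * ((a^2/b - 4) + 16)^3 / (a^2/b - 4)^2"
proof -
  have c: "c4 (W 0 (-2*a) 0 (a^2-4*b) 0) = 16*(a^2+12*b)" unfolding c4_def b2_def b4_def by (simp add: algebra_simps power2_eq_square)
  have d: "disc (W 0 (-2*a) 0 (a^2-4*b) 0) = 256*b*(a^2-4*b)^2" unfolding disc_def b2_def b4_def b6_def b8_def
    by (simp add: algebra_simps power2_eq_square power3_eq_cube)
  have "a^2/b - 4 = (a^2 - 4*b)/b" using assms by (simp add: field_simps)
  moreover have "a^2/b - 4 + 16 = (a^2 + 12*b)/b" using assms by (simp add: field_simps)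
  ultimately have "16 * ((a^2/b - 4) + 16)^3 / (a^2/b - 4)^2 = 16 * (a^2+12*b)^3 / (b * (a^2-4*b)^2)"
    using assms aux[of b "a^2-4*b" "a^2+12*b"] by simp
  then show ?thesis unfolding jinv_def c d using assms aux2[of b "a^2-4*b" "a^2+12*b"]
    by simp
qed

lemma iso_jinv: fixes E E' :: "'k::field weier"
  assumes "weier_iso E E'" shows "jinv E' = jinv E"
proof -
  obtain u r s t where u: "u \<noteq> 0" and
    e1: "u * a1 E' = a1 E + 2 * s" and
    e2: "u ^ 2 * a2 E' = a2 E - s * a1 E + 3 * r - s ^ 2" and
    e3: "u ^ 3 * a3 E' = a3 E + r * a1 E + 2 * t" and
    e4: "u ^ 4 * a4 E' = a4 E - s * a3 E + 2 * r * a2 E - (t + r * s) * a1 E + 3 * r ^ 2 - 2 * s * t" and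
    e6: "u ^ 6 * a6 E' = a6 E + r * a4 E + r ^ 2 * a2 E + r ^ 3 - t * a3 E - t ^ 2 - r * t * a1 E"
    using assms unfolding weier_iso_def by blast
  have E': "E' = W ((a1 E+2*s)/u) ((a2 E - s*a1 E + 3*r - s^2)/u^2) ((a3 E + r*a1 E + 2*t)/u^3)
     ((a4 E - s*a3 E + 2*r*a2 E - (t+r*s)*a1 E + 3*r^2 - 2*s*t)/u^4)
     ((a6 E + r*a4 E + r^2*a2 E + r^3 - t*a3 E - t^2 - r*t*a1 E)/u^6)"
    using u e1 e2 e3 e4 e6 by (cases E') (simp add: eq_divide_eq mult.commute)
  have E: "E = W (a1 E) (a2 E) (a3 E) (a4 E) (a6 E)" by simp
  have c: "c4 E' = c4 E / u^4" using iso_c4[OF u] E' E by metis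
  have d: "disc E' = disc E / u^12" using iso_disc[OF u] E' E by metis
  show ?thesis unfolding jinv_def c d using u
    by (cases "disc E = 0") (simp_all add: field_simps power_mult_distrib flip: power_mult)
qed

theorem proposition3p10:
  fixes v :: "'k::field_char_0 \<Rightarrow> int" and E1 E2 :: "'k weier"
  assumes dval: "ndval v" and hens: "henselian v"
    and resclosed: "residue_alg_closed v" and reschar2: "0 < v 2"
    and ell1: "elliptic E1" and ell2: "elliptic E2"
    and isog: "two_isogenous E1 E2"
    and j1nz: "jinv E1 \<noteq> 0" and j2nz: "jinv E2 \<noteq> 0"
  shows "(v (jinv E1) = v (jinv E2) \<and> 0 < v (jinv E1) \<longrightarrow>
            v (jinv E1) = 6 * v 2 \<and> v (jinv E2) = 6 * v 2)
       \<and> (0 < v (jinv E1) \<and> v (jinv E1) < v (jinv E2) \<longrightarrow>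
            v (jinv E1) < 6 * v 2
          \<and> (v (jinv E1) < 4 * v 2 \<longrightarrow> v (jinv E2) = 2 * v (jinv E1))
          \<and> (4 * v 2 < v (jinv E1) \<and> v (jinv E1) < 6 * v 2 \<longrightarrow>
               v (jinv E2) = 12 * v 2 - v (jinv E1))
          \<and> (v (jinv E1) = 4 * v 2 \<longrightarrow> (\<exists>r::int. 0 \<le> r \<and> v (jinv E2) = 8 * v 2 + 3 * r)))
       \<and> (is_Q2unr v \<and> jinv E1 \<in> Qclos v \<and> jinv E2 \<in> Qclos v \<and>
          v (jinv E1) = 4 * v 2 \<and> 4 * v 2 < v (jinv E2) \<longrightarrow>
            (\<exists>r::int. 1 \<le> r \<and> v (jinv E2) = 8 * v 2 + 3 * r))"
proof -
  obtain a b where b: "b \<noteq> 0" and ab: "a ^ 2 - 4 * b \<noteq> 0" and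
    i1: "weier_iso E1 (W 0 a 0 b 0)" and i2: "weier_iso E2 (W 0 (- 2 * a) 0 (a ^ 2 - 4 * b) 0)"
    using isog unfolding two_isogenous_def by blast
  define u where "u = a^2/b - 4"
  define e where "e = v 2"
  have j1: "jinv E1 = 256 * (u + 1)^3 / u" using iso_jinv[OF i1] jW1[OF b ab] u_def by simp
  have j2: "jinv E2 = 16 * (u + 16)^3 / u^2" using iso_jinv[OF i2] jW2[OF b ab] u_def by simp
  have u0: "u \<noteq> 0" using u_def b ab by (auto simp: field_simps)
  have u1: "u + 1 \<noteq> 0" using j1nz j1 by auto
  have u16: "u + 16 \<noteq> 0" using j2nz j2 by auto
  note vm = v_mult[OF dval] and vd = v_divide[OF dval] and vp = v_power[OF dval]
  have v16: "v 16 = 4 * e" using vp[of 2 4] e_def by simp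
  have v256: "v 256 = 8 * e" using vp[of 2 8] e_def by simp
  have vj1: "v (jinv E1) = 8 * e + 3 * v (u + 1) - v u"
    unfolding j1 using vd[of "256 * (u + 1)^3" u] vm[of 256 "(u+1)^3"] vp[of "u+1" 3] u0 u1 v256 by simp
  have vj2: "v (jinv E2) = 4 * e + 3 * v (u + 16) - 2 * v u"
    unfolding j2 using vd[of "16 * (u + 16)^3" "u^2"] vm[of 16 "(u+16)^3"] vp[of "u+16" 3] vp[of u 2] u0 u16 v16 by simp
  have v1: "v 1 = 0" using v_one[OF dval] .
  have vg16: "vge v (4*e) 16" using v16 vge_self[OF dval, of 16] by simp
  have n16: "(16::'k) \<noteq> 0" by simp
  have F1: "v (u+1) = v u" if "v u < 0"
    using v_strict'[OF dval u0 vge_one[OF dval]] that by simp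
  have F2: "v (u+16) = v u" if "v u < 0"
    using v_strict'[OF dval u0 vge_mono[OF dval vg16, of 0]] that reschar2 e_def by simp
  have F3: "v (u+1) = 0" if "v u > 0"
    using v_strict'[OF dval one_neq_zero vge_self[OF dval, of u]] that v1 by (simp add: add.commute)
  have F4: "v (u+1) \<ge> 0" if "v u \<ge> 0"
    using v_ultra[OF dval u0 one_neq_zero u1] that v1 by simp
  have F5: "v (u+16) = 0" if "v u = 0"
    using v_strict'[OF dval u0 vge_mono[OF dval vg16, of 1]] that reschar2 e_def by simp
  have F6: "v (u+16) = v u" if "v u < 4 * e"
    using v_strict'[OF dval u0 vg16] that by simp
  have F7: "v (u+16) = 4 * e" if "v u > 4 * e"
    using v_strict'[OF dval n16 vge_self[OF dval, of u]] that v16 by (simp add: add.commute)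
  have F8: "v (u+16) \<ge> 4 * e" if "v u = 4 * e"
    using v_ultra[OF dval u0 n16 u16] that v16 by simp
  have epos: "0 < e" using reschar2 e_def by simp
  have P1: "v (jinv E1) = v (jinv E2) \<and> 0 < v (jinv E1) \<longrightarrow>
            v (jinv E1) = 6 * e \<and> v (jinv E2) = 6 * e"
  proof (cases "v u < 0")
    case True then show ?thesis using F1 F2 vj1 vj2 by simp
  next
    case False
    then consider "v u = 0" | "0 < v u \<and> v u < 4 * e" | "v u = 4 * e" | "v u > 4 * e" by linarith
    then show ?thesis using F3 F4 F5 F6 F7 F8 vj1 vj2 epos by cases auto
  qed
  have P2: "0 < v (jinv E1) \<and> v (jinv E1) < v (jinv E2) \<longrightarrow>
            v (jinv E1) < 6 * e
          \<and> (v (jinv E1) < 4 * e \<longrightarrow> v (jinv E2) = 2 * v (jinv E1))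
          \<and> (4 * e < v (jinv E1) \<and> v (jinv E1) < 6 * e \<longrightarrow>
               v (jinv E2) = 12 * e - v (jinv E1))
          \<and> (v (jinv E1) = 4 * e \<longrightarrow> (\<exists>r::int. 0 \<le> r \<and> v (jinv E2) = 8 * e + 3 * r))"
  proof (cases "v u < 0")
    case True then show ?thesis using F1 F2 vj1 vj2 by simp
  next
    case False
    then consider "v u = 0" | "0 < v u \<and> v u < 4 * e" | "v u = 4 * e" | "v u > 4 * e" by linarith
    then show ?thesis
    proof cases
      case 3
      then show ?thesis using F3 F8 vj1 vj2 epos
        by (intro impI conjI; simp) (rule exI[of _ "v (u+16) - 4 * e"]; simp)
    qed (use F3 F4 F5 F6 F7 vj1 vj2 epos in auto)
  qed
  have P3: "(\<exists>r::int. 1 \<le> r \<and> v (jinv E2) = 8 * e + 3 * r)"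
    if Q: "is_Q2unr v" and jq: "jinv E1 \<in> Qclos v" and h4: "v (jinv E1) = 4 * e" and h5: "4 * e < v (jinv E2)"
  proof -
    have e1: "e = 1" using Q e_def unfolding is_Q2unr_def by simp
    have w4: "v u = 4" 
    proof -
      have "\<not> v u < 0" using F1 F2 vj1 vj2 h4 h5 by auto
      moreover have "v u \<noteq> 0" using F4 vj1 h4 epos by auto
      moreover have "\<not> (0 < v u \<and> v u < 4 * e)" using F3 vj1 h4 by auto
      moreover have "\<not> v u > 4 * e" using F3 vj1 h4 epos by auto
      ultimately show ?thesis using e1 by linarith
    qed
    have "v (u + 16) \<noteq> 4"
    proof
      assume A: "v (u + 16) = 4"
      define u0 where "u0 = u / 16"
      have u00: "u0 \<noteq> 0" unfolding u0_def using u0 by simp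
      have vu0: "v u0 = 0" unfolding u0_def using vd[of u 16] u0 v16 e1 w4 by simp
      have u01: "u0 + 1 \<noteq> 0" unfolding u0_def using u16 by (simp add: field_simps)
      have vu01: "v (u0 + 1) = 0" unfolding u0_def using vd[of "u+16" 16] u16 v16 e1 A by (simp add: add_divide_distrib)
      have e1': "v 2 = 1" using e1 e_def by simp
      have g16: "vge v 4 16" using vg16 e1 by simp
      have xeq: "jinv E1 / 16 = (16*u0+1)^3/u0" unfolding j1 u0_def using u0
        by (simp add: field_simps)
      obtain q where qQ: "q \<in> \<rat>" and qa: "jinv E1 = q \<or> 5 \<le> v (jinv E1 - q)"
        using jq unfolding Qclos_def by blast
      have gq: "vge v 5 (jinv E1 - q)" using qa unfolding vge_def by auto
      have qnz: "q \<noteq> 0" using qa j1nz h4 e1 by auto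
      have vq: "v q = 4"
      proof (cases "jinv E1 = q")
        case True then show ?thesis using h4 e1 by simp
      next
        case False
        have "jinv E1 + - (jinv E1 - q) = q" by simp
        then show ?thesis using v_strict'[OF dval j1nz vge_uminus[OF dval gq]] h4 e1 by simp
      qed
      obtain m n where n0: "n > 0" and qmn: "q = of_int m / of_int n" using qQ by (blast elim: Rats_cases')
      have m0: "m \<noteq> 0" using qnz qmn by auto
      have qq: "q / 16 = of_int m / of_int (16 * n)" using qmn by simp
      have vq': "v (q / 16) = 0" using vd[of q 16] qnz vq v16 e1 by simp
      have g1: "vge v 1 (q / 16 - 1)" using v_rat[OF dval e1' m0, of "16*n"] n0 vq' qq by (simp add: mult.commute)
      have g2: "vge v 1 (jinv E1 / 16 - q / 16)"
      proof (cases "jinv E1 = q")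
        case True then show ?thesis by (simp add: vge_def)
      next
        case False
        have eq1: "jinv E1 / 16 - q / 16 = (jinv E1 - q) / 16" by (simp add: diff_divide_distrib)
        have "v ((jinv E1 - q) / 16) = v (jinv E1 - q) - 4"
          using vd[of "jinv E1 - q" 16] False v16 e1 by simp
        then show ?thesis using qa False unfolding vge_def eq1 by auto
      qed
      have g3: "vge v 1 ((16*u0+1)^3/u0 - 1)"
        using vge_add[OF dval g2 g1] xeq by simp
      have gu0: "vge v 0 u0" using vge_self[OF dval, of u0] vu0 by simp
      have g4: "vge v 1 ((16*u0+1)^3 - u0)"
      proof -
        have "(16*u0+1)^3 - u0 = ((16*u0+1)^3/u0 - 1) * u0" using u00 by (simp add: field_simps)
        then show ?thesis using vge_mult[OF dval g3 gu0] by simp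
      qed
      have gS: "vge v 0 (3 + 48*u0 + 256*u0^2)"
      proof -
        have a: "vge v 0 (48*u0)" using vge_mult[OF dval vge_numeral[OF dval] gu0] by simp
        have b: "vge v 0 (256*u0^2)" using vge_mult[OF dval vge_numeral[OF dval] vge_mult[OF dval gu0 gu0]]
          by (simp add: power2_eq_square)
        show ?thesis using vge_add[OF dval vge_add[OF dval vge_numeral[OF dval] a] b] by simp
      qed
      have g5: "vge v 4 (16 * (u0 * (3 + 48*u0 + 256*u0^2)))"
        using vge_mult[OF dval g16 vge_mult[OF dval gu0 gS]] by simp
      have eq: "1 - u0 = ((16*u0+1)^3 - u0) - 16 * (u0 * (3 + 48*u0 + 256*u0^2))"
        by (simp add: algebra_simps power3_eq_cube power2_eq_square)
      have g6: "vge v 1 (1 - u0)" unfolding eq using vge_diff[OF dval g4 vge_mono[OF dval g5, of 1]] by simp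
      have g2': "vge v 1 2" using vge_self[OF dval, of 2] e1' by simp
      have "vge v 1 (2 - (1 - u0))" using vge_diff[OF dval g2' g6] .
      moreover have "2 - (1 - u0) = u0 + 1" by simp
      ultimately show False using u01 vu01 unfolding vge_def by simp
    qed
    then show ?thesis using F8 w4 e1 vj2 by (intro exI[of _ "v (u+16) - 4"]) auto
  qed
  show ?thesis using P1 P2 P3 unfolding e_def by blast
qed

end
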